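(* Let $X$ be a $d$-dimensional Hilbert space, $1\le k<d$, $\Omega\subset X$ an open convex set, $g$ and $h$ Lipschitz convex functions on $\Omega$, $\varepsilon>0$, and $f:=g-h$. For each $k$-dimensional subspace $K\subset X$ let $Z_\varepsilon^K:=\{x\in\Omega: f'_+(x,v)+f'_+(x,-v)>\varepsilon\text{ whenever }v\in K,\ |v|=1\}$, and let $Z_\varepsilon:=\bigcup\{Z_\varepsilon^K: K\text{ a }k\text{-dimensional subspace of }X\}$. Then (i) each $Z_\varepsilon^K$ can be covered by finitely many $(d-k)$-dimensional DC surfaces associated with $K$; (ii) $Z_\varepsilon$ can be covered by finitely many $(d-k)$-dimensional DC surfaces.
   Context: $f'_+(x,v)$ denotes the one-sided directional derivative $\lim_{t\to0+}(f(x+tv)-f(x))/t$. A real function is DC if it is a difference of two convex functions; a mapping into a finite-dimensional space is DC if its composition with every linear functional is DC. For $0<m<d$, a DC surface of dimension $m$ in $X$ is a set $\{w+\varphi(w):w\in W\}$, where $W\subset X$ is an $m$-dimensional subspace and $\varphi:W\to V:=W^\perp$ is a Lipschitz DC mapping; such a surface is said to be associated with $V$. *)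

theory Defs
  imports "HOL-Analysis.Analysis"
begin

definition dir_deriv_plus :: "('a::real_normed_vector \<Rightarrow> real) \<Rightarrow> 'a \<Rightarrow> 'a \<Rightarrow> real" where
  "dir_deriv_plus f x v = Lim (at_right (0::real)) (\<lambda>t. (f (x + t *\<^sub>R v) - f x) / t)"

definition DC_fun_on :: "'a::real_vector set \<Rightarrow> ('a \<Rightarrow> real) \<Rightarrow> bool" where
  "DC_fun_on A u \<longleftrightarrow> (\<exists>c1 c2. convex_on A c1 \<and> convex_on A c2 \<and> (\<forall>x\<in>A. u x = c1 x - c2 x))"

definition DC_map_on :: "'a::real_vector set \<Rightarrow> ('a \<Rightarrow> 'b::real_vector) \<Rightarrow> bool" where
  "DC_map_on A \<phi> \<longleftrightarrow> (\<forall>l :: 'b \<Rightarrow> real. linear l \<longrightarrow> DC_fun_on A (\<lambda>x. l (\<phi> x)))"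

definition DC_surface_assoc :: "nat \<Rightarrow> 'a::euclidean_space set \<Rightarrow> 'a set \<Rightarrow> bool" where
  "DC_surface_assoc m V S \<longleftrightarrow> 0 < m \<and> m < DIM('a) \<and>
     (\<exists>W \<phi>. subspace W \<and> dim W = m \<and> V = orthogonal_comp W \<and>
        (\<forall>w\<in>W. \<phi> w \<in> V) \<and> (\<exists>C. C-lipschitz_on W \<phi>) \<and> DC_map_on W \<phi> \<and>
        S = {w + \<phi> w | w. w \<in> W})"

definition DC_surface :: "nat \<Rightarrow> 'a::euclidean_space set \<Rightarrow> bool" where
  "DC_surface m S \<longleftrightarrow> (\<exists>V. DC_surface_assoc m V S)"

definition Z_eps_K :: "'a::euclidean_space set \<Rightarrow> ('a \<Rightarrow> real) \<Rightarrow> real \<Rightarrow> 'a set \<Rightarrow> 'a set" where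
  "Z_eps_K \<Omega> f \<epsilon> K = {x \<in> \<Omega>. \<forall>v\<in>K. norm v = 1 \<longrightarrow> dir_deriv_plus f x v + dir_deriv_plus f x (- v) > \<epsilon>}"

definition Z_eps :: "'a::euclidean_space set \<Rightarrow> ('a \<Rightarrow> real) \<Rightarrow> real \<Rightarrow> nat \<Rightarrow> 'a set" where
  "Z_eps \<Omega> f \<epsilon> k = \<Union>{Z_eps_K \<Omega> f \<epsilon> K | K. subspace K \<and> dim K = k}"

end

theory Submission
  imports Defs
begin


lemma quot_mono:
  fixes G :: "'a::real_normed_vector \<Rightarrow> real"
  assumes cv: "convex_on UNIV G" and st: "0 < s" "s \<le> t"
  shows "(G (x + s *\<^sub>R v) - G x) / s \<le> (G (x + t *\<^sub>R v) - G x) / t"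
proof -
  have t: "t > 0" using st by simp
  have "x + s *\<^sub>R v = (1 - s/t) *\<^sub>R x + (s/t) *\<^sub>R (x + t *\<^sub>R v)"
    using t by (simp add: algebra_simps)
  then have "G (x + s *\<^sub>R v) \<le> (1 - s/t) * G x + (s/t) * G (x + t *\<^sub>R v)"
    using convex_onD[OF cv, of "s/t" x "x + t *\<^sub>R v"] st t by simp
  then have "G (x + s *\<^sub>R v) - G x \<le> (s/t) * (G (x + t *\<^sub>R v) - G x)"
    by (simp add: algebra_simps)
  then show ?thesis using st t by (simp add: field_simps)
qed

lemma quot_lb:
  fixes G :: "'a::real_normed_vector \<Rightarrow> real"
  assumes lip: "L-lipschitz_on UNIV G" and t: "0 < t"
  shows "\<bar>(G (x + t *\<^sub>R v) - G x) / t\<bar> \<le> L * norm v"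
proof -
  have "\<bar>G (x + t *\<^sub>R v) - G x\<bar> \<le> L * (t * norm v)"
    using lipschitz_onD[OF lip, of "x + t *\<^sub>R v" x] t by (simp add: dist_real_def dist_norm)
  then show ?thesis using t by (simp add: abs_divide field_simps)
qed

lemma dd_tendsto:
  fixes G :: "'a::real_normed_vector \<Rightarrow> real"
  assumes cv: "convex_on UNIV G" and lip: "L-lipschitz_on UNIV G"
  shows "((\<lambda>t. (G (x + t *\<^sub>R v) - G x) / t) \<longlongrightarrow> dir_deriv_plus G x v) (at_right 0)"
proof -
  define Q where "Q t = (G (x + t *\<^sub>R v) - G x) / t" for t
  define I where "I = Inf (Q ` {0<..})"
  have bdd: "bdd_below (Q ` {0<..})"
  proof (rule bdd_belowI)
    fix y assume "y \<in> Q ` {0<..}"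
    then obtain t where "t > 0" "y = Q t" by auto
    then show "- (L * norm v) \<le> y" using quot_lb[OF lip, of t x v] unfolding Q_def by linarith
  qed
  have IQ: "I \<le> Q t" if "t > 0" for t
    unfolding I_def using bdd that by (intro cInf_lower) auto
  have "(Q \<longlongrightarrow> I) (at_right 0)"
  proof (rule order_tendstoI)
    fix a assume "a < I"
    then show "eventually (\<lambda>t. a < Q t) (at_right 0)"
      unfolding eventually_at_right_field using IQ less_le_trans zero_less_one by blast
  next
    fix a assume "I < a"
    then obtain t0 where t0: "t0 > 0" "Q t0 < a"
      unfolding I_def using bdd by (subst (asm) cInf_less_iff) auto
    show "eventually (\<lambda>t. Q t < a) (at_right 0)"
      unfolding eventually_at_right_field
    proof (intro exI[of _ t0] conjI allI impI)
      fix t assume "t > 0" "t < t0"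
      then have "Q t \<le> Q t0" unfolding Q_def by (intro quot_mono[OF cv]) auto
      then show "Q t < a" using t0 by simp
    qed (use t0 in auto)
  qed
  moreover then have "dir_deriv_plus G x v = I"
    unfolding dir_deriv_plus_def Q_def by (intro tendsto_Lim) auto
  ultimately show ?thesis unfolding Q_def by simp
qed

lemma filterlim_scale_right0:
  fixes c :: real assumes "c > 0"
  shows "filterlim (\<lambda>t. c * t) (at_right 0) (at_right 0)"
proof -
  have "((\<lambda>t. c * t) \<longlongrightarrow> c * 0) (at_right 0)"
    by (intro tendsto_intros)
  moreover have "eventually (\<lambda>t. c * t \<in> {0<..} \<and> c * t \<noteq> 0) (at_right (0::real))"
    unfolding eventually_at_right_field using assms by (intro exI[of _ 1]) auto
  ultimately show ?thesis unfolding filterlim_at by simp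
qed

lemma half_avg_eq: "(t::real) > 0 \<Longrightarrow> ((1-1/2)*a + 1/2*b - c)/t = (a-c)/(2*t) + (b-c)/(2*t)"
  by (simp add: field_simps)

lemma ar_nbot: "at_right (0::real) \<noteq> bot" by simp

locale cvxlip =
  fixes G :: "'a::real_normed_vector \<Rightarrow> real" and L :: real
  assumes cv: "convex_on UNIV G" and lip: "L-lipschitz_on UNIV G"
begin

abbreviation D where "D x v \<equiv> dir_deriv_plus G x v"

lemma tl: "((\<lambda>t. (G (x + t *\<^sub>R v) - G x) / t) \<longlongrightarrow> D x v) (at_right 0)"
  by (rule dd_tendsto[OF cv lip])

lemma tl_scaled: assumes "c > 0"
  shows "((\<lambda>t. (G (x + (c*t) *\<^sub>R v) - G x) / (c*t)) \<longlongrightarrow> D x v) (at_right 0)"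
  using filterlim_compose[OF tl filterlim_scale_right0[OF assms]] by simp

lemma D_le: "D x u \<le> G (x + u) - G x"
proof -
  have "eventually (\<lambda>t. (G (x + t *\<^sub>R u) - G x) / t \<le> (G (x + 1 *\<^sub>R u) - G x) / 1) (at_right 0)"
    unfolding eventually_at_right_field
  proof (intro exI[of _ 1] conjI allI impI)
    fix t :: real assume "0 < t" "t < 1"
    then show "(G (x + t *\<^sub>R u) - G x) / t \<le> (G (x + 1 *\<^sub>R u) - G x) / 1"
      by (intro quot_mono[OF cv]) auto
  qed simp
  from tendsto_le[OF ar_nbot tendsto_const tl this] show ?thesis by (simp only: scaleR_one div_by_1)
qed

lemma D_abs: "\<bar>D x u\<bar> \<le> L * norm u"
proof -
  have "eventually (\<lambda>t. \<bar>(G (x + t *\<^sub>R u) - G x) / t\<bar> \<le> L * norm u) (at_right 0)"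
    unfolding eventually_at_right_field
  proof (intro exI[of _ 1] conjI allI impI)
    fix t :: real assume "0 < t" "t < 1"
    then show "\<bar>(G (x + t *\<^sub>R u) - G x) / t\<bar> \<le> L * norm u"
      by (intro quot_lb[OF lip])
  qed simp
  from tendsto_le[OF ar_nbot tendsto_const tendsto_rabs[OF tl] this] show ?thesis by simp
qed

lemma D_lip: "\<bar>D x u - D x u'\<bar> \<le> L * norm (u - u')"
proof -
  have "eventually (\<lambda>t. \<bar>(G (x + t *\<^sub>R u) - G x) / t - (G (x + t *\<^sub>R u') - G x) / t\<bar> \<le> L * norm (u - u')) (at_right 0)"
    unfolding eventually_at_right_field
  proof (intro exI[of _ 1] conjI allI impI)
    fix t :: real assume t: "0 < t"
    have "\<bar>G (x + t *\<^sub>R u) - G (x + t *\<^sub>R u')\<bar> \<le> L * (t * norm (u - u'))"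
      using lipschitz_onD[OF lip, of "x + t *\<^sub>R u" "x + t *\<^sub>R u'"] t
      by (simp add: dist_real_def dist_norm scaleR_diff_right[symmetric])
    then show "\<bar>(G (x + t *\<^sub>R u) - G x) / t - (G (x + t *\<^sub>R u') - G x) / t\<bar> \<le> L * norm (u - u')"
      using t by (simp add: diff_divide_distrib[symmetric] abs_divide field_simps)
  qed simp
  from tendsto_le[OF ar_nbot tendsto_const tendsto_rabs[OF tendsto_diff[OF tl tl]] this] show ?thesis by simp
qed

lemma D_zero: "D x 0 = 0"
  unfolding dir_deriv_plus_def by (simp add: tendsto_Lim[OF _ tendsto_const])

lemma D_scale: assumes "a \<ge> 0" shows "D x (a *\<^sub>R u) = a * D x u"
proof (cases "a = 0")
  case True then show ?thesis using D_zero by simp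
next
  case False
  then have a: "a > 0" using assms by simp
  have l1: "((\<lambda>t. a * ((G (x + (a*t) *\<^sub>R u) - G x) / (a*t))) \<longlongrightarrow> a * D x u) (at_right 0)"
    by (intro tendsto_mult tendsto_const tl_scaled a)
  have ev: "eventually (\<lambda>t. a * ((G (x + (a*t) *\<^sub>R u) - G x) / (a*t)) = (G (x + t *\<^sub>R (a *\<^sub>R u)) - G x) / t) (at_right 0)"
    unfolding eventually_at_right_field using a by (intro exI[of _ 1]) (auto simp: mult.commute)
  have "((\<lambda>t. (G (x + t *\<^sub>R (a *\<^sub>R u)) - G x) / t) \<longlongrightarrow> a * D x u) (at_right 0)"
    using l1 tendsto_cong[OF ev] by simp
  from tendsto_unique[OF _ tl this] show ?thesis by simp
qed

lemma D_add: "D x (u + u') \<le> D x u + D x u'"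
proof -
  have "eventually (\<lambda>t. (G (x + t *\<^sub>R (u + u')) - G x) / t \<le>
     (G (x + (2*t) *\<^sub>R u) - G x) / (2*t) + (G (x + (2*t) *\<^sub>R u') - G x) / (2*t)) (at_right 0)"
    unfolding eventually_at_right_field
  proof (intro exI[of _ 1] conjI allI impI)
    fix t :: real assume t: "0 < t"
    have hx: "(1/2::real) *\<^sub>R x + (1/2) *\<^sub>R x = x" using scaleR_add_left[of "1/2::real" "1/2" x] by simp
    have e: "x + t *\<^sub>R (u + u') = (1 - 1/2) *\<^sub>R (x + (2*t) *\<^sub>R u) + (1/2) *\<^sub>R (x + (2*t) *\<^sub>R u')"
      by (simp add: algebra_simps hx)
    have "G (x + t *\<^sub>R (u + u')) \<le> (1 - 1/2) * G (x + (2*t) *\<^sub>R u) + (1/2) * G (x + (2*t) *\<^sub>R u')"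
      unfolding e by (rule convex_onD[OF cv]) auto
    then have "(G (x + t *\<^sub>R (u + u')) - G x) / t \<le> ((1 - 1/2) * G (x + (2*t) *\<^sub>R u) + (1/2) * G (x + (2*t) *\<^sub>R u') - G x) / t"
      using t by (intro divide_right_mono) linarith+
    also have "\<dots> = (G (x + (2*t) *\<^sub>R u) - G x) / (2*t) + (G (x + (2*t) *\<^sub>R u') - G x) / (2*t)"
      using t by (rule half_avg_eq)
    finally show "(G (x + t *\<^sub>R (u + u')) - G x) / t \<le>
     (G (x + (2*t) *\<^sub>R u) - G x) / (2*t) + (G (x + (2*t) *\<^sub>R u') - G x) / (2*t)" .
  qed simp
  from tendsto_le[OF ar_nbot tendsto_add[OF tl_scaled tl_scaled] tl this] show ?thesis by simp
qed

lemma D_pm: "D x u + D x (- u) \<ge> 0"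
  using D_add[of x u "-u"] D_zero by simp

lemma D_sum: "finite S \<Longrightarrow> D x (\<Sum>i\<in>S. f i) \<le> (\<Sum>i\<in>S. D x (f i))"
proof (induction S rule: finite_induct)
  case empty then show ?case using D_zero by simp
next
  case (insert i S)
  then show ?case using D_add[of x "f i" "sum f S"] by simp
qed

end



lemma inf_comb_le:
  fixes A B :: "real set" and c \<mu> :: real
  assumes "A \<noteq> {}" "B \<noteq> {}" "bdd_below A" "bdd_below B" "0 \<le> \<mu>" "\<mu> \<le> 1"
    and le: "\<And>a b. a \<in> A \<Longrightarrow> b \<in> B \<Longrightarrow> c \<le> (1 - \<mu>) * a + \<mu> * b"
  shows "c \<le> (1 - \<mu>) * Inf A + \<mu> * Inf B"
proof (rule ccontr)
  assume H: "\<not> c \<le> (1 - \<mu>) * Inf A + \<mu> * Inf B"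
  define \<delta> where "\<delta> = c - ((1 - \<mu>) * Inf A + \<mu> * Inf B)"
  have d: "\<delta> > 0" using H unfolding \<delta>_def by simp
  obtain a where a: "a \<in> A" "a < Inf A + \<delta>"
    using assms(1,3) d by (meson cInf_lessD less_add_same_cancel1)
  obtain b where b: "b \<in> B" "b < Inf B + \<delta>"
    using assms(2,4) d by (meson cInf_lessD less_add_same_cancel1)
  have "(1 - \<mu>) * a \<le> (1 - \<mu>) * (Inf A + \<delta>)" using a assms(6) by (intro mult_left_mono) auto
  moreover have "\<mu> * b \<le> \<mu> * (Inf B + \<delta>)" using b assms(5) by (intro mult_left_mono) auto
  moreover have "(1 - \<mu>) * a + \<mu> * b \<noteq> (1 - \<mu>) * (Inf A + \<delta>) + \<mu> * (Inf B + \<delta>)"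
  proof
    assume eq: "(1 - \<mu>) * a + \<mu> * b = (1 - \<mu>) * (Inf A + \<delta>) + \<mu> * (Inf B + \<delta>)"
    show False
    proof (cases "\<mu> = 1")
      case True then show ?thesis using eq b by simp
    next
      case False
      then have "(1 - \<mu>) * a < (1 - \<mu>) * (Inf A + \<delta>)" using a assms(6) by (intro mult_strict_left_mono) auto
      then show ?thesis using eq \<open>\<mu> * b \<le> \<mu> * (Inf B + \<delta>)\<close> by linarith
    qed
  qed
  ultimately have "(1 - \<mu>) * a + \<mu> * b < (1 - \<mu>) * (Inf A + \<delta>) + \<mu> * (Inf B + \<delta>)" by linarith
  also have "\<dots> = c" unfolding \<delta>_def by (simp add: algebra_simps)
  finally show False using le[OF a(1) b(1)] by simp
qed

definition lext :: "'a::real_normed_vector set \<Rightarrow> real \<Rightarrow> ('a \<Rightarrow> real) \<Rightarrow> 'a \<Rightarrow> real" where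
  "lext \<Omega> L g x = Inf ((\<lambda>y. g y + L * dist x y) ` \<Omega>)"

lemma lext_props:
  fixes g :: "'a::real_normed_vector \<Rightarrow> real"
  assumes "\<Omega> \<noteq> {}" "convex \<Omega>" "convex_on \<Omega> g" "L-lipschitz_on \<Omega> g"
  shows "convex_on UNIV (lext \<Omega> L g)" "L-lipschitz_on UNIV (lext \<Omega> L g)"
    "\<And>x. x \<in> \<Omega> \<Longrightarrow> lext \<Omega> L g x = g x"
proof -
  have L: "L \<ge> 0" using assms(4) lipschitz_on_nonneg by blast
  obtain y0 where y0: "y0 \<in> \<Omega>" using assms(1) by auto
  have lb: "g y0 - L * dist x y0 \<le> g y + L * dist x y" if "y \<in> \<Omega>" for x y
  proof -
    have "\<bar>g y - g y0\<bar> \<le> L * dist y y0" using lipschitz_onD[OF assms(4) that y0] by (simp add: dist_real_def)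
    moreover have "L * dist y y0 \<le> L * (dist x y + dist x y0)" using mult_left_mono[OF dist_triangle[of y y0 x] L] by (simp add: dist_commute)
    ultimately show ?thesis unfolding distrib_left abs_le_iff by linarith
  qed
  have bdd: "bdd_below ((\<lambda>y. g y + L * dist x y) ` \<Omega>)" for x
    using lb by (intro bdd_belowI2) blast
  have ne: "(\<lambda>y. g y + L * dist x y) ` \<Omega> \<noteq> {}" for x using assms(1) by simp
  have le: "lext \<Omega> L g x \<le> g y + L * dist x y" if "y \<in> \<Omega>" for x y
    unfolding lext_def using bdd that by (intro cInf_lower) auto
  show "x \<in> \<Omega> \<Longrightarrow> lext \<Omega> L g x = g x" for x
  proof -
    assume x: "x \<in> \<Omega>"
    have "g x \<le> g y + L * dist x y" if "y \<in> \<Omega>" for y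
      using lipschitz_onD[OF assms(4) x that] by (simp add: dist_real_def abs_le_iff)
    then have "g x \<le> lext \<Omega> L g x" unfolding lext_def using ne by (intro cInf_greatest) auto
    moreover have "lext \<Omega> L g x \<le> g x" using le[OF x, of x] by simp
    ultimately show ?thesis by simp
  qed
  have half: "lext \<Omega> L g x \<le> lext \<Omega> L g x' + L * dist x x'" for x x'
  proof -
    have "lext \<Omega> L g x - L * dist x x' \<le> g y + L * dist x' y" if "y \<in> \<Omega>" for y
    proof -
      have "dist x y \<le> dist x x' + dist x' y" by (rule dist_triangle)
      then have "L * dist x y \<le> L * dist x x' + L * dist x' y" using mult_left_mono[OF _ L] by (metis distrib_left)
      then show ?thesis using le[OF that, of x] by linarith
    qed
    then have "lext \<Omega> L g x - L * dist x x' \<le> lext \<Omega> L g x'"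
      unfolding lext_def[of _ _ _ x'] using ne by (intro cInf_greatest) auto
    then show ?thesis by simp
  qed
  show "L-lipschitz_on UNIV (lext \<Omega> L g)"
  proof (rule lipschitz_onI)
    fix x x' :: 'a
    show "dist (lext \<Omega> L g x) (lext \<Omega> L g x') \<le> L * dist x x'"
      using half[of x x'] half[of x' x] by (simp add: dist_real_def dist_commute abs_le_iff)
  qed (rule L)
  show "convex_on UNIV (lext \<Omega> L g)"
  proof (rule convex_onI)
    fix \<mu> :: real and x1 x2 :: 'a assume mu: "0 < \<mu>" "\<mu> < 1"
    show "lext \<Omega> L g ((1 - \<mu>) *\<^sub>R x1 + \<mu> *\<^sub>R x2) \<le> (1 - \<mu>) * lext \<Omega> L g x1 + \<mu> * lext \<Omega> L g x2"
      unfolding lext_def[of _ _ _ x1] lext_def[of _ _ _ x2]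
    proof (rule inf_comb_le[OF ne ne bdd bdd])
      fix a b assume a: "a \<in> (\<lambda>y. g y + L * dist x1 y) ` \<Omega>" and b: "b \<in> (\<lambda>y. g y + L * dist x2 y) ` \<Omega>"
      then obtain y1 y2 where y: "y1 \<in> \<Omega>" "y2 \<in> \<Omega>" "a = g y1 + L * dist x1 y1" "b = g y2 + L * dist x2 y2" by auto
      define y where "y = (1 - \<mu>) *\<^sub>R y1 + \<mu> *\<^sub>R y2"
      have yO: "y \<in> \<Omega>" unfolding y_def using assms(2) y mu by (intro convexD) auto
      have gy: "g y \<le> (1 - \<mu>) * g y1 + \<mu> * g y2"
        unfolding y_def using mu y by (intro convex_onD[OF assms(3)]) auto
      have "dist ((1 - \<mu>) *\<^sub>R x1 + \<mu> *\<^sub>R x2) y = norm ((1 - \<mu>) *\<^sub>R (x1 - y1) + \<mu> *\<^sub>R (x2 - y2))"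
        unfolding y_def dist_norm by (simp add: algebra_simps)
      also have "\<dots> \<le> norm ((1 - \<mu>) *\<^sub>R (x1 - y1)) + norm (\<mu> *\<^sub>R (x2 - y2))" by (rule norm_triangle_ineq)
      also have "\<dots> = (1 - \<mu>) * dist x1 y1 + \<mu> * dist x2 y2" using mu by (simp add: dist_norm)
      finally have dd: "dist ((1 - \<mu>) *\<^sub>R x1 + \<mu> *\<^sub>R x2) y \<le> (1 - \<mu>) * dist x1 y1 + \<mu> * dist x2 y2" .
      have "lext \<Omega> L g ((1 - \<mu>) *\<^sub>R x1 + \<mu> *\<^sub>R x2) \<le> g y + L * dist ((1 - \<mu>) *\<^sub>R x1 + \<mu> *\<^sub>R x2) y"
        by (rule le[OF yO])
      also have "\<dots> \<le> (1 - \<mu>) * g y1 + \<mu> * g y2 + L * ((1 - \<mu>) * dist x1 y1 + \<mu> * dist x2 y2)"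
        using gy mult_left_mono[OF dd L] by linarith
      also have "\<dots> = (1 - \<mu>) * a + \<mu> * b" using y by (simp add: algebra_simps)
      finally show "lext \<Omega> L g ((1 - \<mu>) *\<^sub>R x1 + \<mu> *\<^sub>R x2) \<le> (1 - \<mu>) * a + \<mu> * b" .
    qed (use mu in auto)
  qed simp
qed



lemma inner_ball:
  fixes p :: "'a::euclidean_space \<Rightarrow> real" and K :: "'a set"
  assumes sub: "\<And>u v. p (u + v) \<le> p u + p v"
    and hom: "\<And>a u. a \<ge> 0 \<Longrightarrow> p (a *\<^sub>R u) = a * p u"
    and cont: "continuous_on UNIV p"
    and K: "subspace K" "K \<noteq> {0}"
    and eps: "\<epsilon> > 0"
    and wid: "\<And>v. v \<in> K \<Longrightarrow> norm v = 1 \<Longrightarrow> p v + p (-v) > \<epsilon>"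
  shows "\<exists>c. \<forall>u\<in>K. inner c u + (\<epsilon> / (DIM('a) + 2)) * norm u \<le> p u"
proof -
  define \<rho> where "\<rho> = \<epsilon> / (DIM('a) + 2)"
  have rho: "\<rho> > 0" unfolding \<rho>_def using eps by simp
  have p0: "p 0 = 0" using hom[of 0 0] by simp
  have psum: "p (\<Sum>i\<in>S. f i) \<le> (\<Sum>i\<in>S. p (f i))" if "finite S" for S and f :: "'b \<Rightarrow> 'a"
    using that
  proof (induction S rule: finite_induct)
    case empty then show ?case using p0 by simp
  next
    case (insert i S) then show ?case using sub[of "f i" "sum f S"] by simp
  qed
  obtain v0 where v0: "v0 \<in> K" "norm v0 = 1"
  proof -
    obtain w where "w \<in> K" "w \<noteq> 0" using K subspace_0 by blast
    then show ?thesis using that[of "w /\<^sub>R norm w"] K(1) subspace_scale by auto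
  qed
  define E where "E = K \<inter> sphere (0::'a) 1"
  define T where "T = (\<lambda>u. (u, p u - \<rho>)) ` E"
  have "compact E" unfolding E_def using K(1) by (intro closed_Int_compact closed_subspace compact_sphere) auto
  moreover have "continuous_on E (\<lambda>u. (u, p u - \<rho>))"
    by (intro continuous_intros continuous_on_subset[OF cont]) auto
  ultimately have cT: "compact T" unfolding T_def by (rule compact_continuous_image[rotated])
  have v0T: "(v0, p v0 - \<rho>) \<in> T" unfolding T_def E_def using v0 by auto
  define H where "H = convex hull T"
  define R where "R = {0::'a} \<times> {..(0::real)}"
  have HR: "H \<inter> R = {}"
  proof (rule ccontr)
    assume "H \<inter> R \<noteq> {}"
    then obtain s where s: "(0, s) \<in> H" "s \<le> 0" unfolding R_def by auto
    then obtain S where S: "finite S" "S \<subseteq> T" "card S \<le> DIM('a \<times> real) + 1" "(0, s) \<in> convex hull S"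
      unfolding H_def caratheodory[of T] by blast
    then obtain u where u: "\<forall>x\<in>S. 0 \<le> u x" "sum u S = 1" "(\<Sum>x\<in>S. u x *\<^sub>R x) = (0, s)"
      using convex_hull_finite[OF S(1)] by auto
    have Sne: "S \<noteq> {}" using u(2) by auto
    have ST: "fst x \<in> K" "norm (fst x) = 1" "snd x = p (fst x) - \<rho>" if "x \<in> S" for x
      using S(2) that unfolding T_def E_def by auto
    have f0: "(\<Sum>x\<in>S. u x *\<^sub>R fst x) = 0"
      using arg_cong[OF u(3), of fst] by (simp add: fst_sum)
    have sS: "(\<Sum>x\<in>S. u x * (p (fst x) - \<rho>)) = s"
      using arg_cong[OF u(3), of snd] ST(3) by (simp add: snd_sum)
    obtain z0 where z0: "z0 \<in> S" "u z0 = Max (u ` S)"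
      using Max_in[of "u ` S"] S(1) Sne by (metis (no_types, lifting) finite_imageI image_iff image_is_empty)
    have umax: "u x \<le> u z0" if "x \<in> S" for x using z0 S(1) that by simp
    have "1 \<le> of_nat (card S) * u z0" using u(2) sum_bounded_above[of S u "u z0", OF umax] by simp
    moreover have "card S \<le> DIM('a) + 2" using S(3) by simp
    ultimately have "1 \<le> (DIM('a) + 2) * u z0"
      by (smt (verit, best) u(1) z0(1) mult_right_mono of_nat_le_iff of_nat_add of_nat_numeral)
    then have "\<epsilon> * 1 \<le> \<epsilon> * ((DIM('a) + 2) * u z0)" using eps by (intro mult_left_mono) auto
    then have uz: "\<rho> \<le> \<epsilon> * u z0" unfolding \<rho>_def
      by (subst pos_divide_le_eq) (auto simp: algebra_simps)
    have "u z0 *\<^sub>R fst z0 + (\<Sum>x\<in>S - {z0}. u x *\<^sub>R fst x) = 0"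
      using f0 sum.remove[OF S(1) z0(1), of "\<lambda>x. u x *\<^sub>R fst x"] by simp
    from minus_unique[OF this] have "u z0 *\<^sub>R (- fst z0) = (\<Sum>x\<in>S - {z0}. u x *\<^sub>R fst x)"
      by simp
    then have "u z0 * p (- fst z0) \<le> (\<Sum>x\<in>S - {z0}. p (u x *\<^sub>R fst x))"
      using hom[of "u z0" "- fst z0"] u(1) z0(1) psum[of "S - {z0}" "\<lambda>x. u x *\<^sub>R fst x"] S(1) by simp
    also have "\<dots> = (\<Sum>x\<in>S - {z0}. u x * p (fst x))"
      using hom u(1) by (intro sum.cong) auto
    finally have A: "u z0 * p (- fst z0) \<le> (\<Sum>x\<in>S - {z0}. u x * p (fst x))" .
    have B: "(\<Sum>x\<in>S. u x * p (fst x)) = u z0 * p (fst z0) + (\<Sum>x\<in>S - {z0}. u x * p (fst x))"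
      using sum.remove[OF S(1) z0(1)] .
    have "u z0 > 0" using \<open>1 \<le> (DIM('a) + 2) * u z0\<close> u(1) z0(1)
      by (smt (verit) mult_nonneg_nonpos of_nat_0_le_iff)
    then have "u z0 * \<epsilon> < u z0 * (p (fst z0) + p (- fst z0))"
      using wid[OF ST(1,2)[OF z0(1)]] by simp
    then have "\<rho> < (\<Sum>x\<in>S. u x * p (fst x))" using A B uz by (simp add: algebra_simps)
    moreover have "(\<Sum>x\<in>S. u x * (p (fst x) - \<rho>)) = (\<Sum>x\<in>S. u x * p (fst x)) - \<rho>"
      using u(2) by (simp add: right_diff_distrib sum_subtractf sum_distrib_right[symmetric])
    ultimately show False using sS s(2) by simp
  qed
  have "convex H" "compact H" "H \<noteq> {}" unfolding H_def using cT v0T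
    by (auto intro: compact_convex_hull hull_subset[THEN subsetD])
  moreover have "convex R" "closed R" unfolding R_def by (auto intro: convex_Times closed_Times)
  ultimately obtain a b where ab: "\<forall>x\<in>H. inner a x < b" "\<forall>x\<in>R. inner a x > b"
    using separating_hyperplane_compact_closed HR by metis
  obtain a1 a0 where a: "a = (a1, a0)" by (cases a)
  have "(0, 0) \<in> R" unfolding R_def by auto
  then have b0: "b < 0" using ab(2) unfolding a by fastforce
  have a0le: "a0 \<le> 0"
  proof (rule ccontr)
    assume "\<not> a0 \<le> 0"
    then have "(0, b / a0) \<in> R" unfolding R_def using b0 \<open>\<not> a0 \<le> 0\<close> by (auto simp: divide_nonpos_pos)
    then show False using ab(2) \<open>\<not> a0 \<le> 0\<close> unfolding a by auto
  qed
  have TH: "\<And>v. v \<in> K \<Longrightarrow> norm v = 1 \<Longrightarrow> inner a1 v + a0 * (p v - \<rho>) < b"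
  proof -
    fix v assume "v \<in> K" "norm v = 1"
    then have "(v, p v - \<rho>) \<in> H" unfolding H_def T_def E_def by (auto intro: hull_subset[THEN subsetD])
    then show "inner a1 v + a0 * (p v - \<rho>) < b" using ab(1) unfolding a by auto
  qed
  have a0: "a0 < 0"
  proof (rule ccontr)
    assume "\<not> a0 < 0"
    then have "a0 = 0" using a0le by simp
    then have "inner a1 v0 < b" "inner a1 (- v0) < b"
      using TH[OF v0] TH[of "- v0"] v0 K(1) subspace_neg by auto
    then show False using b0 by simp
  qed
  define c where "c = (- 1 / a0) *\<^sub>R a1"
  have unit: "inner c v + \<rho> \<le> p v" if "v \<in> K" "norm v = 1" for v
  proof -
    have "a0 * (p v - \<rho>) < - inner a1 v" using TH[OF that] b0 by simp
    then have "p v - \<rho> > - inner a1 v / a0" using a0 by (simp add: field_simps)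
    then show ?thesis unfolding c_def using a0 by (simp add: field_simps)
  qed
  show ?thesis
  proof (intro exI[of _ c] ballI)
    fix u assume uK: "u \<in> K"
    show "inner c u + (\<epsilon> / (DIM('a) + 2)) * norm u \<le> p u"
    proof (cases "u = 0")
      case True then show ?thesis using p0 by simp
    next
      case False
      define v where "v = u /\<^sub>R norm u"
      have v: "v \<in> K" "norm v = 1" unfolding v_def using uK K(1) False subspace_scale by auto
      have uv: "u = norm u *\<^sub>R v" unfolding v_def using False by simp
      have "p u = norm u * p v" using hom[of "norm u" v] uv by simp
      also have "\<dots> \<ge> norm u * (inner c v + \<rho>)" using unit[OF v] by (simp add: mult_left_mono)
      finally have "norm u * (inner c v + \<rho>) \<le> p u" .
      moreover have "norm u * inner c v = inner c u" by (subst (2) uv) simp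
      ultimately show ?thesis unfolding \<rho>_def[symmetric] by (simp add: algebra_simps)
    qed
  qed
qed



lemma convex_on_sum_fun:
  assumes "finite B" "convex S" "\<And>b. b \<in> B \<Longrightarrow> convex_on S (f b)"
  shows "convex_on S (\<lambda>x. \<Sum>b\<in>B. f b x)"
  using assms(1,3)
proof (induction B rule: finite_induct)
  case empty then show ?case using assms(2) by (simp add: convex_on_const)
next
  case (insert b B) then show ?case by (simp add: convex_on_add)
qed

lemma dim_orth_comp:
  fixes K :: "'a::euclidean_space set"
  assumes "subspace K"
  shows "dim (orthogonal_comp K) = DIM('a) - dim K"
proof -
  have "dim {y \<in> UNIV. \<forall>x \<in> K. orthogonal x y} + dim K = dim (UNIV::'a set)"
    by (rule dim_subspace_orthogonal_to_vectors[OF assms subspace_UNIV subset_UNIV])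
  moreover have "{y \<in> UNIV. \<forall>x \<in> K. orthogonal x y} = orthogonal_comp K"
    unfolding orthogonal_comp_def by auto
  ultimately show ?thesis by simp
qed

lemma flat_surface:
  fixes K :: "'a::euclidean_space set"
  assumes K: "subspace K" "0 < dim K" "dim K < DIM('a)"
  shows "DC_surface_assoc (DIM('a) - dim K) K {w + (\<lambda>_. 0) w | w. w \<in> orthogonal_comp K}"
  unfolding DC_surface_assoc_def
proof (intro conjI exI)
  show "subspace (orthogonal_comp K)" by (rule subspace_orthogonal_comp)
  show "dim (orthogonal_comp K) = DIM('a) - dim K" by (rule dim_orth_comp[OF K(1)])
  show "K = orthogonal_comp (orthogonal_comp K)" using orthogonal_comp_self[OF K(1)] by simp
  show "\<forall>w\<in>orthogonal_comp K. (\<lambda>_. 0) w \<in> K" using K(1) subspace_0 by auto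
  show "0-lipschitz_on (orthogonal_comp K) (\<lambda>_::'a. 0::'a)" by (rule lipschitz_onI) auto
  show "DC_map_on (orthogonal_comp K) (\<lambda>_::'a. 0::'a)"
    unfolding DC_map_on_def DC_fun_on_def
    by (intro allI impI exI[of _ "\<lambda>_. 0"] conjI) (auto simp: linear_0 convex_on_const subspace_imp_convex subspace_orthogonal_comp)
qed (use K in auto)

lemma surface_exists:
  fixes G :: "'a::euclidean_space \<Rightarrow> real" and K :: "'a set"
  assumes cv: "convex_on UNIV G" and lip: "L-lipschitz_on UNIV G"
    and K: "subspace K" "0 < dim K" "dim K < DIM('a)"
    and r: "r > 0"
  shows "\<exists>S. DC_surface_assoc (DIM('a) - dim K) K S \<and>
             {x. \<forall>u\<in>K. G x + inner c u + r * norm u \<le> G (x + u)} \<subseteq> S"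
proof (cases "{x. \<forall>u\<in>K. G x + inner c u + r * norm u \<le> G (x + u)} = {}")
  case True then show ?thesis using flat_surface[OF K] by blast
next
  case False
  define A where "A = {x. \<forall>u\<in>K. G x + inner c u + r * norm u \<le> G (x + u)}"
  obtain x0 where x0: "x0 \<in> A" using False unfolding A_def by auto
  have L: "L \<ge> 0" using lip lipschitz_on_nonneg by blast
  obtain B where B: "B \<subseteq> K" "pairwise orthogonal B" "\<And>x. x \<in> B \<Longrightarrow> norm x = 1"
    "independent B" "card B = dim K" "span B = K"
    using orthonormal_basis_subspace[OF K(1)] by metis
  have fB: "finite B" using B(4) independent_imp_finite by blast
  have bb: "\<forall>x\<in>B. \<forall>y\<in>B. x \<bullet> y = (if x=y then 1 else 0)"
    using B(2,3) norm_eq_1 by (auto simp: orthogonal_def pairwise_def)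
  define W where "W = orthogonal_comp K"
  have W: "subspace W" "dim W = DIM('a) - dim K" "K = orthogonal_comp W"
    unfolding W_def using subspace_orthogonal_comp dim_orth_comp[OF K(1)] orthogonal_comp_self[OF K(1)] by auto
  define P where "P x = (\<Sum>b\<in>B. (x \<bullet> b) *\<^sub>R b)" for x
  have PK: "P x \<in> K" for x unfolding P_def using B(1) K(1)
    by (intro subspace_sum subspace_scale) auto
  have Pb: "b \<bullet> P x = x \<bullet> b" if "b \<in> B" for b x
    using that fB unfolding P_def
    by (simp add: bb algebra_simps inner_sum_right if_distrib [of "(*)v" for v] inner_commute cong: if_cong)
  have PW: "x - P x \<in> W" for x
    unfolding W_def orthogonal_comp_def orthogonal_def mem_Collect_eq
  proof
    fix y assume "y \<in> K"
    with \<open>span B = K\<close> span_finite [OF fB]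
    obtain u where u: "y = (\<Sum>b\<in>B. u b *\<^sub>R b)" by auto
    have "b \<bullet> (x - P x) = 0" if "b \<in> B" for b
      using Pb[OF that] by (simp add: inner_diff_right inner_commute)
    then show "y \<bullet> (x - P x) = 0" by (simp add: u inner_sum_left)
  qed
  define M where "M q w = Inf ((\<lambda>u. G (w + u) - inner q u) ` K)" for q w
  define adm where "adm q \<longleftrightarrow> (\<forall>u\<in>K. inner q u \<le> inner c u + r * norm u)" for q
  have minval: "G x - inner q (P x) \<le> G (x - P x + u) - inner q u"
    if "adm q" "x \<in> A" "u \<in> K" for q x u
  proof -
    have u': "u - P x \<in> K" using that(3) PK K(1) subspace_diff by blast
    have "G x + inner c (u - P x) + r * norm (u - P x) \<le> G (x + (u - P x))"
      using that(2) u' unfolding A_def by blast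
    moreover have "inner q (u - P x) \<le> inner c (u - P x) + r * norm (u - P x)"
      using that(1) u' unfolding adm_def by blast
    moreover have "x + (u - P x) = x - P x + u" by (simp add: algebra_simps)
    ultimately show ?thesis by (simp add: inner_diff_right)
  qed
  have ne: "(\<lambda>u. G (w + u) - inner q u) ` K \<noteq> {}" for w q using K(1) subspace_0 by blast
  have bdd: "bdd_below ((\<lambda>u. G (w + u) - inner q u) ` K)" if "adm q" for q w
  proof (rule bdd_belowI2)
    fix u assume u: "u \<in> K"
    have "G (x0 - P x0 + u) - G (w + u) \<le> L * dist (x0 - P x0 + u) (w + u)"
      using lipschitz_onD[OF lip, of "x0 - P x0 + u" "w + u"] by (simp add: dist_real_def)
    moreover have "dist (x0 - P x0 + u) (w + u) = norm (w - (x0 - P x0))"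
      by (simp add: dist_norm norm_minus_commute)
    ultimately have "G (x0 - P x0 + u) - G (w + u) \<le> L * norm (w - (x0 - P x0))" by simp
    then show "G x0 - inner q (P x0) - L * norm (w - (x0 - P x0)) \<le> G (w + u) - inner q u"
      using minval[OF that x0 u] by linarith
  qed
  have Mval: "M q (x - P x) = G x - inner q (P x)" if "adm q" "x \<in> A" for q x
    unfolding M_def
  proof (rule cInf_eq_minimum)
    show "G x - inner q (P x) \<in> (\<lambda>u. G (x - P x + u) - inner q u) ` K"
      using PK by (intro image_eqI[of _ _ "P x"]) auto
  qed (use minval[OF that] in auto)
  have Mlip: "M q w \<le> M q w' + L * dist w w'" if "adm q" for q w w'
  proof -
    have "M q w - L * dist w w' \<le> G (w' + u) - inner q u" if u: "u \<in> K" for u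
    proof -
      have "M q w \<le> G (w + u) - inner q u" unfolding M_def using bdd[OF \<open>adm q\<close>] u by (intro cInf_lower) auto
      moreover have "G (w + u) - G (w' + u) \<le> L * dist w w'"
        using lipschitz_onD[OF lip, of "w + u" "w' + u"] by (simp add: dist_real_def dist_norm)
      ultimately show ?thesis by linarith
    qed
    then have "M q w - L * dist w w' \<le> M q w'" unfolding M_def[of q w'] using ne
      by (intro cInf_greatest) auto
    then show ?thesis by simp
  qed
  have Mabs: "\<bar>M q w - M q w'\<bar> \<le> L * dist w w'" if "adm q" for q w w'
    using Mlip[OF that, of w w'] Mlip[OF that, of w' w] by (simp add: dist_commute abs_le_iff)
  have Mconv: "convex_on UNIV (M q)" if "adm q" for q
  proof (rule convex_onI)
    fix \<mu> :: real and w1 w2 :: 'a assume mu: "0 < \<mu>" "\<mu> < 1"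
    show "M q ((1 - \<mu>) *\<^sub>R w1 + \<mu> *\<^sub>R w2) \<le> (1 - \<mu>) * M q w1 + \<mu> * M q w2"
      unfolding M_def[of q w1] M_def[of q w2]
    proof (rule inf_comb_le[OF ne ne bdd[OF that] bdd[OF that]])
      fix a b assume a: "a \<in> (\<lambda>u. G (w1 + u) - inner q u) ` K" and b: "b \<in> (\<lambda>u. G (w2 + u) - inner q u) ` K"
      then obtain u1 u2 where uu: "u1 \<in> K" "u2 \<in> K" "a = G (w1 + u1) - inner q u1" "b = G (w2 + u2) - inner q u2" by auto
      define u where "u = (1 - \<mu>) *\<^sub>R u1 + \<mu> *\<^sub>R u2"
      have uK: "u \<in> K" unfolding u_def using K(1) uu by (intro subspace_add subspace_scale) auto
      have e: "(1 - \<mu>) *\<^sub>R w1 + \<mu> *\<^sub>R w2 + u = (1 - \<mu>) *\<^sub>R (w1 + u1) + \<mu> *\<^sub>R (w2 + u2)"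
        unfolding u_def by (simp add: algebra_simps)
      have "M q ((1 - \<mu>) *\<^sub>R w1 + \<mu> *\<^sub>R w2) \<le> G ((1 - \<mu>) *\<^sub>R w1 + \<mu> *\<^sub>R w2 + u) - inner q u"
        unfolding M_def using bdd[OF that] uK by (intro cInf_lower) auto
      also have "\<dots> \<le> (1 - \<mu>) * G (w1 + u1) + \<mu> * G (w2 + u2) - inner q u"
        unfolding e using mu by (simp add: convex_onD[OF cv])
      also have "\<dots> = (1 - \<mu>) * a + \<mu> * b" unfolding uu u_def by (simp add: algebra_simps inner_add_right)
      finally show "M q ((1 - \<mu>) *\<^sub>R w1 + \<mu> *\<^sub>R w2) \<le> (1 - \<mu>) * a + \<mu> * b" .
    qed (use mu in auto)
  qed simp
  have adm_c: "adm c" unfolding adm_def using r by simp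
  have adm_b: "adm (c + r *\<^sub>R b)" if "b \<in> B" for b
    unfolding adm_def
  proof
    fix u assume "u \<in> K"
    have "inner b u \<le> norm b * norm u" by (rule norm_cauchy_schwarz)
    then have "r * inner b u \<le> r * norm u" using B(3)[OF that] r by simp
    then show "inner (c + r *\<^sub>R b) u \<le> inner c u + r * norm u" by (simp add: inner_add_left)
  qed
  define coef where "coef b w = (M c w - M (c + r *\<^sub>R b) w) / r" for b w
  define \<phi> where "\<phi> w = (\<Sum>b\<in>B. coef b w *\<^sub>R b)" for w
  have phiK: "\<phi> w \<in> K" for w unfolding \<phi>_def using B(1) K(1)
    by (intro subspace_sum subspace_scale) auto
  have phiA: "\<phi> (x - P x) = P x" if "x \<in> A" for x
  proof -
    have "coef b (x - P x) = x \<bullet> b" if "b \<in> B" for b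
      unfolding coef_def using Mval[OF adm_c \<open>x \<in> A\<close>] Mval[OF adm_b[OF that] \<open>x \<in> A\<close>] Pb[OF that, of x] r
      by (simp add: inner_add_left)
    then show ?thesis unfolding \<phi>_def P_def by (intro sum.cong) auto
  qed
  have coeflip: "\<bar>coef b w - coef b w'\<bar> \<le> (2 * L / r) * dist w w'" if "b \<in> B" for b w w'
  proof -
    have "\<bar>(M c w - M (c + r *\<^sub>R b) w) - (M c w' - M (c + r *\<^sub>R b) w')\<bar> \<le> 2 * L * dist w w'"
      using Mabs[OF adm_c, of w w'] Mabs[OF adm_b[OF that], of w w'] by (simp add: abs_le_iff)
    then show ?thesis unfolding coef_def using r
      by (simp add: diff_divide_distrib[symmetric] abs_divide divide_le_eq mult.commute)
  qed
  have philip: "(real (card B) * (2 * L / r))-lipschitz_on W \<phi>"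
  proof (rule lipschitz_onI)
    fix w w' assume "w \<in> W" "w' \<in> W"
    have "dist (\<phi> w) (\<phi> w') = norm (\<Sum>b\<in>B. (coef b w - coef b w') *\<^sub>R b)"
      unfolding \<phi>_def dist_norm by (simp add: sum_subtractf scaleR_diff_left)
    also have "\<dots> \<le> (\<Sum>b\<in>B. norm ((coef b w - coef b w') *\<^sub>R b))" by (rule norm_sum)
    also have "\<dots> \<le> (\<Sum>b\<in>B. (2 * L / r) * dist w w')"
      using coeflip B(3) by (intro sum_mono) simp
    also have "\<dots> = real (card B) * (2 * L / r) * dist w w'" by simp
    finally show "dist (\<phi> w) (\<phi> w') \<le> real (card B) * (2 * L / r) * dist w w'" .
  qed (use L r in simp)
  have convW: "convex W" using W(1) subspace_imp_convex by blast
  have phiDC: "DC_map_on W \<phi>"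
    unfolding DC_map_on_def DC_fun_on_def
  proof (intro allI impI)
    fix l :: "'a \<Rightarrow> real" assume l: "linear l"
    define pos where "pos b = max 0 (l b / r)" for b
    define neg where "neg b = max 0 (- (l b / r))" for b
    define c1 where "c1 w = (\<Sum>b\<in>B. pos b * M c w + neg b * M (c + r *\<^sub>R b) w)" for w
    define c2 where "c2 w = (\<Sum>b\<in>B. neg b * M c w + pos b * M (c + r *\<^sub>R b) w)" for w
    have cc: "convex_on W (M c)" "\<And>b. b \<in> B \<Longrightarrow> convex_on W (M (c + r *\<^sub>R b))"
      using Mconv adm_c adm_b convex_on_subset convW by blast+
    have "convex_on W c1" unfolding c1_def
      by (intro convex_on_sum_fun[OF fB convW] convex_on_add convex_on_cmul cc) (auto simp: pos_def neg_def)
    moreover have "convex_on W c2" unfolding c2_def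
      by (intro convex_on_sum_fun[OF fB convW] convex_on_add convex_on_cmul cc) (auto simp: pos_def neg_def)
    moreover have "l (\<phi> w) = c1 w - c2 w" for w
    proof -
      have "l (\<phi> w) = (\<Sum>b\<in>B. coef b w * l b)"
        unfolding \<phi>_def by (simp add: linear_sum[OF l] linear_scale[OF l])
      also have "\<dots> = (\<Sum>b\<in>B. (pos b * M c w + neg b * M (c + r *\<^sub>R b) w) - (neg b * M c w + pos b * M (c + r *\<^sub>R b) w))"
      proof (rule sum.cong)
        fix b assume "b \<in> B"
        have "pos b - neg b = l b / r" unfolding pos_def neg_def by auto
        have "(pos b * M c w + neg b * M (c + r *\<^sub>R b) w) - (neg b * M c w + pos b * M (c + r *\<^sub>R b) w)
            = (pos b - neg b) * (M c w - M (c + r *\<^sub>R b) w)" by (simp add: algebra_simps)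
        also have "\<dots> = (l b / r) * (M c w - M (c + r *\<^sub>R b) w)" using \<open>pos b - neg b = l b / r\<close> by simp
        also have "\<dots> = coef b w * l b" unfolding coef_def by simp
        finally show "coef b w * l b = (pos b * M c w + neg b * M (c + r *\<^sub>R b) w) - (neg b * M c w + pos b * M (c + r *\<^sub>R b) w)" by simp
      qed simp
      also have "\<dots> = c1 w - c2 w" unfolding c1_def c2_def by (simp add: sum_subtractf)
      finally show ?thesis .
    qed
    ultimately show "\<exists>c1 c2. convex_on W c1 \<and> convex_on W c2 \<and> (\<forall>x\<in>W. l (\<phi> x) = c1 x - c2 x)" by blast
  qed
  define S where "S = {w + \<phi> w | w. w \<in> W}"
  have "DC_surface_assoc (DIM('a) - dim K) K S"
    unfolding DC_surface_assoc_def
    using K W phiK philip phiDC unfolding S_def by (intro conjI exI[of _ W] exI[of _ \<phi>]) auto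
  moreover have "A \<subseteq> S"
  proof
    fix x assume "x \<in> A"
    then have "x = (x - P x) + \<phi> (x - P x)" using phiA by simp
    then show "x \<in> S" unfolding S_def using PW by blast
  qed
  ultimately show ?thesis unfolding A_def by blast
qed



lemma dd_diff:
  fixes g h gg hh :: "'a::real_normed_vector \<Rightarrow> real"
  assumes "open \<Omega>" "x \<in> \<Omega>" "\<And>y. y \<in> \<Omega> \<Longrightarrow> gg y = g y" "\<And>y. y \<in> \<Omega> \<Longrightarrow> hh y = h y"
    and "cvxlip gg Lg" "cvxlip hh Lh"
  shows "dir_deriv_plus (\<lambda>x. g x - h x) x v = dir_deriv_plus gg x v - dir_deriv_plus hh x v"
proof -
  obtain e where e: "e > 0" "ball x e \<subseteq> \<Omega>" using assms(1,2) open_contains_ball by blast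
  have ev: "eventually (\<lambda>t. (gg (x + t *\<^sub>R v) - gg x) / t - (hh (x + t *\<^sub>R v) - hh x) / t
      = ((g (x + t *\<^sub>R v) - h (x + t *\<^sub>R v)) - (g x - h x)) / t) (at_right 0)"
    unfolding eventually_at_right_field
  proof (intro exI[of _ "e / (norm v + 1)"] conjI allI impI)
    have "norm v + 1 > 0" by (smt (verit) norm_ge_zero)
    then show "0 < e / (norm v + 1)" using e by (intro divide_pos_pos)
    fix t :: real assume t: "0 < t" "t < e / (norm v + 1)"
    then have "t * norm v < e"
      by (smt (verit, best) e(1) mult_left_mono norm_ge_zero pos_less_divide_eq)
    then have "x + t *\<^sub>R v \<in> \<Omega>" using e t by (intro subsetD[OF e(2)]) (simp add: dist_norm)
    then show "(gg (x + t *\<^sub>R v) - gg x) / t - (hh (x + t *\<^sub>R v) - hh x) / t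
      = ((g (x + t *\<^sub>R v) - h (x + t *\<^sub>R v)) - (g x - h x)) / t"
      using assms(2,3,4) by (simp add: diff_divide_distrib)
  qed
  have "((\<lambda>t. (gg (x + t *\<^sub>R v) - gg x) / t - (hh (x + t *\<^sub>R v) - hh x) / t) \<longlongrightarrow>
        dir_deriv_plus gg x v - dir_deriv_plus hh x v) (at_right 0)"
    by (intro tendsto_diff cvxlip.tl[OF assms(5)] cvxlip.tl[OF assms(6)])
  then have "((\<lambda>t. ((g (x + t *\<^sub>R v) - h (x + t *\<^sub>R v)) - (g x - h x)) / t) \<longlongrightarrow>
        dir_deriv_plus gg x v - dir_deriv_plus hh x v) (at_right 0)"
    using tendsto_cong[OF ev] by simp
  then show ?thesis unfolding dir_deriv_plus_def by (intro tendsto_Lim) auto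
qed

lemma cvxlip_lext:
  assumes "\<Omega> \<noteq> {}" "convex \<Omega>" "convex_on \<Omega> g" "L-lipschitz_on \<Omega> g"
  shows "cvxlip (lext \<Omega> L g) L"
  using lext_props[OF assms] by (unfold_locales) auto

lemma part_i:
  fixes \<Omega> :: "'a::euclidean_space set" and g h :: "'a \<Rightarrow> real" and k :: nat and \<epsilon> :: real
  assumes k: "1 \<le> k" "k < DIM('a)"
    and \<Omega>: "open \<Omega>" "convex \<Omega>"
    and cg: "convex_on \<Omega> g" and ch: "convex_on \<Omega> h"
    and lg: "Lg-lipschitz_on \<Omega> g" and lh: "Lh-lipschitz_on \<Omega> h"
    and eps: "\<epsilon> > 0"
    and K: "subspace K" "dim K = k"
  shows "\<exists>F. finite F \<and> (\<forall>S\<in>F. DC_surface_assoc (DIM('a) - k) K S) \<and>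
                 Z_eps_K \<Omega> (\<lambda>x. g x - h x) \<epsilon> K \<subseteq> \<Union>F"
proof (cases "\<Omega> = {}")
  case True then show ?thesis unfolding Z_eps_K_def by (intro exI[of _ "{}"]) auto
next
  case False
  define gg where "gg = lext \<Omega> Lg g"
  define hh where "hh = lext \<Omega> Lh h"
  have Gl: "cvxlip gg Lg" unfolding gg_def by (rule cvxlip_lext[OF False \<Omega>(2) cg lg])
  have Hl: "cvxlip hh Lh" unfolding hh_def by (rule cvxlip_lext[OF False \<Omega>(2) ch lh])
  have geq: "\<And>y. y \<in> \<Omega> \<Longrightarrow> gg y = g y" unfolding gg_def using lext_props[OF False \<Omega>(2) cg lg] by blast
  have heq: "\<And>y. y \<in> \<Omega> \<Longrightarrow> hh y = h y" unfolding hh_def using lext_props[OF False \<Omega>(2) ch lh] by blast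
  have Lg: "Lg \<ge> 0" using lg lipschitz_on_nonneg by blast
  define \<rho> where "\<rho> = \<epsilon> / (DIM('a) + 2)"
  have rho: "\<rho> > 0" unfolding \<rho>_def using eps by simp
  obtain N where N: "finite N" "N \<subseteq> cball (0::'a) Lg" "cball (0::'a) Lg \<subseteq> (\<Union>n\<in>N. ball n (\<rho>/2))"
    using seq_compact_imp_totally_bounded[OF compact_imp_seq_compact[OF compact_cball[of "0::'a" Lg]]] rho
    by (metis half_gt_zero)
  define A where "A n = {x. \<forall>u\<in>K. gg x + inner n u + (\<rho>/2) * norm u \<le> gg (x + u)}" for n
  have dK: "0 < dim K" "dim K < DIM('a)" using K k by auto
  define Sf where "Sf n = (SOME S. DC_surface_assoc (DIM('a) - dim K) K S \<and> A n \<subseteq> S)" for n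
  have Sf: "DC_surface_assoc (DIM('a) - dim K) K (Sf n) \<and> A n \<subseteq> Sf n" for n
  proof -
    have "\<exists>S. DC_surface_assoc (DIM('a) - dim K) K S \<and> A n \<subseteq> S" unfolding A_def
      using surface_exists[OF cvxlip.cv[OF Gl] cvxlip.lip[OF Gl] K(1) dK, of "\<rho>/2" n] rho by simp
    then show ?thesis unfolding Sf_def by (rule someI_ex)
  qed
  have K0: "K \<noteq> {0}" using K k by auto
  show ?thesis
  proof (intro exI[of _ "Sf ` N"] conjI ballI)
    show "finite (Sf ` N)" using N(1) by simp
    show "DC_surface_assoc (DIM('a) - k) K S" if "S \<in> Sf ` N" for S using that Sf K(2) by auto
    show "Z_eps_K \<Omega> (\<lambda>x. g x - h x) \<epsilon> K \<subseteq> \<Union> (Sf ` N)"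
    proof
      fix x assume xZ: "x \<in> Z_eps_K \<Omega> (\<lambda>x. g x - h x) \<epsilon> K"
      then have x: "x \<in> \<Omega>" unfolding Z_eps_K_def by auto
      define p where "p = dir_deriv_plus gg x"
      have fd: "dir_deriv_plus (\<lambda>x. g x - h x) x v = p v - dir_deriv_plus hh x v" for v
        unfolding p_def by (rule dd_diff[OF \<Omega>(1) x geq heq Gl Hl])
      have wid: "p v + p (-v) > \<epsilon>" if "v \<in> K" "norm v = 1" for v
        using xZ that fd cvxlip.D_pm[OF Hl, of x v] unfolding Z_eps_K_def by fastforce
      have plip: "Lg-lipschitz_on UNIV p"
        unfolding p_def using cvxlip.D_lip[OF Gl] Lg by (intro lipschitz_onI) (auto simp: dist_real_def dist_norm)
      obtain c0 where c0: "\<forall>u\<in>K. inner c0 u + \<rho> * norm u \<le> p u"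
        using inner_ball[of p K \<epsilon>, OF _ _ lipschitz_on_continuous_on[OF plip] K(1) K0 eps wid]
          cvxlip.D_add[OF Gl] cvxlip.D_scale[OF Gl] unfolding p_def \<rho>_def by blast
      obtain y z where yz: "y \<in> span K" "\<And>w. w \<in> span K \<Longrightarrow> orthogonal z w" "c0 = y + z"
        using orthogonal_subspace_decomp_exists[of K c0] by metis
      have yK: "y \<in> K" using yz(1) K(1) span_eq_iff by blast
      have iy: "inner y u = inner c0 u" if "u \<in> K" for u
        using yz(2)[of u] that yz(3) span_base[of u K] by (simp add: inner_add_left inner_add_right orthogonal_def inner_commute)
      have yb: "norm y \<le> Lg"
      proof -
        have "inner y y + \<rho> * norm y \<le> p y" using c0 yK iy[OF yK] by simp
        also have "\<dots> \<le> Lg * norm y" unfolding p_def using cvxlip.D_abs[OF Gl, of x y] by simp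
        finally have H: "norm y * norm y + \<rho> * norm y \<le> Lg * norm y" by (simp add: power2_norm_eq_inner[symmetric] power2_eq_square)
        have "0 \<le> \<rho> * norm y" using rho by simp
        then have "norm y * norm y \<le> Lg * norm y" using H by linarith
        then show ?thesis by (cases "norm y = 0") (use Lg in auto)
      qed
      then obtain n where n: "n \<in> N" "dist n y < \<rho>/2" using N(3) by (auto simp: dist_commute)
      have "x \<in> A n" unfolding A_def mem_Collect_eq
      proof (intro ballI)
        fix u assume u: "u \<in> K"
        have "inner (n - y) u \<le> norm (n - y) * norm u" by (rule norm_cauchy_schwarz)
        also have "\<dots> \<le> (\<rho>/2) * norm u" using n(2) by (intro mult_right_mono) (auto simp: dist_norm)
        finally have "inner n u + (\<rho>/2) * norm u \<le> inner c0 u + \<rho> * norm u"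
          using iy[OF u] by (simp add: inner_diff_left)
        also have "\<dots> \<le> p u" using c0 u by blast
        also have "\<dots> \<le> gg (x + u) - gg x" unfolding p_def by (rule cvxlip.D_le[OF Gl])
        finally show "gg x + inner n u + \<rho> / 2 * norm u \<le> gg (x + u)" by simp
      qed
      then show "x \<in> \<Union> (Sf ` N)" using Sf n(1) by blast
    qed
  qed
qed



lemma approx_family:
  fixes k :: nat and \<delta> :: real
  assumes k: "k \<ge> 1" and d: "\<delta> > 0"
  shows "\<exists>Fam. finite Fam \<and> (\<forall>K\<in>Fam. subspace K \<and> dim K = k) \<and>
     (\<forall>K'::'a::euclidean_space set. subspace K' \<and> dim K' = k \<longrightarrow>
        (\<exists>K\<in>Fam. \<forall>v\<in>K. norm v = 1 \<longrightarrow> (\<exists>v'\<in>K'. norm v' = 1 \<and> norm (v - v') \<le> \<delta>)))"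
proof -
  define I where "I = {0..<k}"
  have fI: "finite I" and cI: "card I = k" unfolding I_def by auto
  define \<eta> where "\<eta> = min (1 / (4 * k)) (\<delta> / (4 * k))"
  have eta: "\<eta> > 0" unfolding \<eta>_def using k d by simp
  have keta: "k * \<eta> \<le> 1/4" "k * \<eta> \<le> \<delta>/4" unfolding \<eta>_def using k
    by (auto simp: min_def field_simps)
  obtain N1 where N1: "finite N1" "N1 \<subseteq> cball (0::'a) 1" "cball (0::'a) 1 \<subseteq> (\<Union>n\<in>N1. ball n \<eta>)"
    using seq_compact_imp_totally_bounded[OF compact_imp_seq_compact[OF compact_cball[of "0::'a" 1]]] eta
    by metis
  define Fam where "Fam = (\<lambda>n. span (n ` I)) ` {n \<in> Pi\<^sub>E I (\<lambda>_. N1). dim (span (n ` I)) = k}"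
  have "finite Fam" unfolding Fam_def using N1(1) fI by (intro finite_imageI finite_subset[OF _ finite_PiE]) auto
  moreover have "\<forall>K\<in>Fam. subspace K \<and> dim K = k" unfolding Fam_def by auto
  moreover have "\<exists>K\<in>Fam. \<forall>v\<in>K. norm v = 1 \<longrightarrow> (\<exists>v'\<in>K'. norm v' = 1 \<and> norm (v - v') \<le> \<delta>)"
    if K': "subspace K'" "dim K' = k" for K' :: "'a set"
  proof -
    obtain B where B: "B \<subseteq> K'" "pairwise orthogonal B" "\<And>x. x \<in> B \<Longrightarrow> norm x = 1"
      "independent B" "card B = dim K'" "span B = K'"
      using orthonormal_basis_subspace[OF K'(1)] by metis
    have fB: "finite B" using B(4) independent_imp_finite by blast
    obtain e where e: "bij_betw e I B" using ex_bij_betw_nat_finite[OF fB] B(5) K'(2) unfolding I_def by auto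
    have eB: "e i \<in> B" if "i \<in> I" for i using e that bij_betwE by blast
    have eo: "inner (e i) (e j) = (if i = j then 1 else 0)" if "i \<in> I" "j \<in> I" for i j
    proof (cases "i = j")
      case True then show ?thesis using B(3)[OF eB[OF that(1)]] by (simp add: norm_eq_1)
    next
      case False
      then have "e i \<noteq> e j" using e that bij_betw_imp_inj_on inj_onD by metis
      then show ?thesis using B(2) eB that False by (auto simp: pairwise_def orthogonal_def)
    qed
    have ch: "\<exists>m. m \<in> N1 \<and> dist m (e i) < \<eta>" if "i \<in> I" for i
    proof -
      have "e i \<in> cball 0 1" using B(3)[OF eB[OF that]] by simp
      then obtain m where "m \<in> N1" "e i \<in> ball m \<eta>" using N1(3) by blast
      then show ?thesis by (auto simp: mem_ball)
    qed
    define n where "n = restrict (\<lambda>i. SOME m. m \<in> N1 \<and> dist m (e i) < \<eta>) I"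
    have n: "n i \<in> N1" "norm (n i - e i) < \<eta>" if "i \<in> I" for i
      using someI_ex[OF ch[OF that]] that unfolding n_def by (auto simp: dist_norm)
    have nPi: "n \<in> Pi\<^sub>E I (\<lambda>_. N1)" unfolding n_def using n(1) by (auto simp: n_def)
    define V where "V a = (\<Sum>i\<in>I. a i *\<^sub>R e i)" for a
    have Vcoef: "\<bar>a j\<bar> \<le> norm (V a)" if "j \<in> I" for a j
    proof -
      have "inner (e j) (V a) = (\<Sum>i\<in>I. a i * inner (e j) (e i))"
        unfolding V_def by (simp add: inner_sum_right)
      also have "\<dots> = (\<Sum>i\<in>I. if i = j then a i else 0)"
        by (rule sum.cong) (use eo[of j] that in auto)
      also have "\<dots> = a j" using that fI by simp
      finally have "inner (e j) (V a) = a j" .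
      then have "\<bar>a j\<bar> = \<bar>inner (e j) (V a)\<bar>" by simp
      also have "\<dots> \<le> norm (e j) * norm (V a)" by (rule Cauchy_Schwarz_ineq2)
      finally show ?thesis using B(3)[OF eB[OF that]] by simp
    qed
    have close: "norm ((\<Sum>i\<in>I. a i *\<^sub>R n i) - V a) \<le> k * \<eta> * norm (V a)" for a
    proof -
      have "norm ((\<Sum>i\<in>I. a i *\<^sub>R n i) - V a) = norm (\<Sum>i\<in>I. a i *\<^sub>R (n i - e i))"
        unfolding V_def by (simp add: sum_subtractf scaleR_diff_right)
      also have "\<dots> \<le> (\<Sum>i\<in>I. norm (a i *\<^sub>R (n i - e i)))" by (rule norm_sum)
      also have "\<dots> \<le> (\<Sum>i\<in>I. norm (V a) * \<eta>)"
      proof (rule sum_mono)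
        fix i assume i: "i \<in> I"
        have "\<bar>a i\<bar> * norm (n i - e i) \<le> norm (V a) * \<eta>"
          using Vcoef[OF i] n(2)[OF i] by (intro mult_mono) auto
        then show "norm (a i *\<^sub>R (n i - e i)) \<le> norm (V a) * \<eta>" by simp
      qed
      also have "\<dots> = k * \<eta> * norm (V a)" using cI by simp
      finally show ?thesis .
    qed
    have lower: "norm (V a) \<le> 2 * norm (\<Sum>i\<in>I. a i *\<^sub>R n i)" for a
    proof -
      have "norm (V a) \<le> norm (\<Sum>i\<in>I. a i *\<^sub>R n i) + norm ((\<Sum>i\<in>I. a i *\<^sub>R n i) - V a)"
        by (metis norm_triangle_sub norm_minus_commute)
      moreover have "k * \<eta> * norm (V a) \<le> (1/4) * norm (V a)"
        using keta(1) by (intro mult_right_mono) auto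
      ultimately show ?thesis using close[of a] norm_ge_zero[of "\<Sum>i\<in>I. a i *\<^sub>R n i"] by linarith
    qed
    have zero: "a i = 0" if "(\<Sum>i\<in>I. a i *\<^sub>R n i) = 0" "i \<in> I" for a i
      using lower[of a] Vcoef[OF that(2), of a] that(1) by simp
    have inj: "inj_on n I"
    proof (rule inj_onI)
      fix i j assume ij: "i \<in> I" "j \<in> I" "n i = n j"
      show "i = j"
      proof (rule ccontr)
        assume "i \<noteq> j"
        define a where "a x = (if x = i then 1 else if x = j then -1 else (0::real))" for x
        have "(\<Sum>x\<in>I. a x *\<^sub>R n x) = (\<Sum>x\<in>{i, j}. a x *\<^sub>R n x)"
          using ij fI unfolding a_def by (intro sum.mono_neutral_right) auto
        also have "\<dots> = 0" using \<open>i \<noteq> j\<close> ij unfolding a_def by simp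
        finally have "a i = 0" using zero ij(1) by blast
        then show False unfolding a_def by simp
      qed
    qed
    have indep: "independent (n ` I)"
    proof
      assume "dependent (n ` I)"
      then obtain u where u: "\<exists>v\<in>n ` I. u v \<noteq> 0" "(\<Sum>v\<in>n ` I. u v *\<^sub>R v) = 0"
        using dependent_finite[of "n ` I"] fI by auto
      have "(\<Sum>i\<in>I. u (n i) *\<^sub>R n i) = 0" using u(2) sum.reindex[OF inj, of "\<lambda>v. u v *\<^sub>R v"] by simp
      then show False using zero[of "\<lambda>i. u (n i)"] u(1) by auto
    qed
    have dimK: "dim (span (n ` I)) = k"
      using dim_eq_card_independent[OF indep] card_image[OF inj] cI by simp
    have repr: "\<exists>a. v = (\<Sum>i\<in>I. a i *\<^sub>R n i)" if vs: "v \<in> span (n ` I)" for v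
    proof -
      obtain u where "v = (\<Sum>w\<in>n ` I. u w *\<^sub>R w)" using vs span_finite[of "n ` I"] fI by auto
      then have "v = (\<Sum>i\<in>I. u (n i) *\<^sub>R n i)" using sum.reindex[OF inj, of "\<lambda>w. u w *\<^sub>R w"] by simp
      then show ?thesis by (intro exI[of _ "\<lambda>i. u (n i)"])
    qed
    have KF: "span (n ` I) \<in> Fam" unfolding Fam_def using nPi dimK by blast
    show ?thesis
    proof (intro bexI[OF _ KF] ballI impI)
      fix v assume v: "v \<in> span (n ` I)" "norm v = 1"
      obtain a where a: "v = (\<Sum>i\<in>I. a i *\<^sub>R n i)" using repr[OF v(1)] by blast
      have VK: "V a \<in> K'" unfolding V_def using eB B(1) K'(1) by (intro subspace_sum subspace_scale) auto
      have nV: "norm (V a) \<le> 2" using lower[of a] a v(2) by simp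
      have dvV: "norm (v - V a) \<le> \<delta> / 2" and dvV2: "norm (v - V a) \<le> 1/2"
      proof -
        have "norm (v - V a) \<le> k * \<eta> * norm (V a)" using close[of a] a by simp
        also have "\<dots> \<le> k * \<eta> * 2" using nV keta eta by (intro mult_left_mono) auto
        finally show "norm (v - V a) \<le> \<delta> / 2" "norm (v - V a) \<le> 1/2" using keta by auto
      qed
      have "norm (V a) \<ge> 1/2" using v(2) dvV2 norm_triangle_sub[of v "V a"] by linarith
      then have Vnz: "norm (V a) > 0" by linarith
      define v' where "v' = V a /\<^sub>R norm (V a)"
      have v'K: "v' \<in> K'" unfolding v'_def using VK K'(1) subspace_scale by blast
      have nv': "norm v' = 1" unfolding v'_def using Vnz by simp
      have "norm (V a - v') = \<bar>norm (V a) - 1\<bar>"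
      proof -
        have "V a - v' = (norm (V a) - 1) *\<^sub>R v'" unfolding v'_def using Vnz by (simp add: algebra_simps)
        then show ?thesis using nv' by simp
      qed
      also have "\<dots> = \<bar>norm (V a) - norm v\<bar>" using v(2) by simp
      also have "\<dots> \<le> norm (V a - v)" by (rule norm_triangle_ineq3)
      finally have "norm (V a - v') \<le> norm (v - V a)" by (simp add: norm_minus_commute)
      moreover have "norm (v - v') \<le> norm (v - V a) + norm (V a - v')"
        by (metis norm_triangle_ineq diff_add_cancel add.commute add_diff_eq)
      ultimately have "norm (v - v') \<le> \<delta>" using dvV by linarith
      then show "\<exists>v'\<in>K'. norm v' = 1 \<and> norm (v - v') \<le> \<delta>" using v'K nv' by blast
    qed
  qed
  ultimately show ?thesis by blast
qed



lemma part_ii: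
  fixes \<Omega> :: "'a::euclidean_space set" and g h :: "'a \<Rightarrow> real" and k :: nat and \<epsilon> :: real
  assumes k: "1 \<le> k" "k < DIM('a)"
    and \<Omega>: "open \<Omega>" "convex \<Omega>"
    and cg: "convex_on \<Omega> g" and ch: "convex_on \<Omega> h"
    and lg: "Lg-lipschitz_on \<Omega> g" and lh: "Lh-lipschitz_on \<Omega> h"
    and eps: "\<epsilon> > 0"
  shows "\<exists>F. finite F \<and> (\<forall>S\<in>F. DC_surface (DIM('a) - k) S) \<and>
                 Z_eps \<Omega> (\<lambda>x. g x - h x) \<epsilon> k \<subseteq> \<Union>F"
proof (cases "\<Omega> = {}")
  case True then show ?thesis unfolding Z_eps_def Z_eps_K_def by (intro exI[of _ "{}"]) auto
next
  case False
  define gg where "gg = lext \<Omega> Lg g"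
  define hh where "hh = lext \<Omega> Lh h"
  have Gl: "cvxlip gg Lg" unfolding gg_def by (rule cvxlip_lext[OF False \<Omega>(2) cg lg])
  have Hl: "cvxlip hh Lh" unfolding hh_def by (rule cvxlip_lext[OF False \<Omega>(2) ch lh])
  have geq: "\<And>y. y \<in> \<Omega> \<Longrightarrow> gg y = g y" unfolding gg_def using lext_props[OF False \<Omega>(2) cg lg] by blast
  have heq: "\<And>y. y \<in> \<Omega> \<Longrightarrow> hh y = h y" unfolding hh_def using lext_props[OF False \<Omega>(2) ch lh] by blast
  have Lg: "Lg \<ge> 0" using lg lipschitz_on_nonneg by blast
  have Lh: "Lh \<ge> 0" using lh lipschitz_on_nonneg by blast
  define \<delta> where "\<delta> = \<epsilon> / (4 * (Lg + Lh) + 1)"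
  have dpos: "\<delta> > 0" unfolding \<delta>_def using eps Lg Lh by simp
  have dsmall: "2 * (Lg + Lh) * \<delta> \<le> \<epsilon> / 2"
  proof -
    have "2 * (Lg + Lh) * \<delta> = \<epsilon> * (2 * (Lg + Lh)) / (4 * (Lg + Lh) + 1)" unfolding \<delta>_def by simp
    also have "\<dots> \<le> \<epsilon> / 2" using eps Lg Lh by (simp add: divide_le_eq field_simps)
    finally show ?thesis .
  qed
  obtain Fam where Fam: "finite Fam" "\<forall>K\<in>Fam. subspace K \<and> dim K = k"
    "\<forall>K'::'a set. subspace K' \<and> dim K' = k \<longrightarrow>
        (\<exists>K\<in>Fam. \<forall>v\<in>K. norm v = 1 \<longrightarrow> (\<exists>v'\<in>K'. norm v' = 1 \<and> norm (v - v') \<le> \<delta>))"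
    using approx_family[OF k(1) dpos] by blast
  define FF where "FF K = (SOME F. finite F \<and> (\<forall>S\<in>F. DC_surface_assoc (DIM('a) - k) K S) \<and>
                 Z_eps_K \<Omega> (\<lambda>x. g x - h x) (\<epsilon>/2) K \<subseteq> \<Union>F)" for K
  have FF: "finite (FF K) \<and> (\<forall>S\<in>FF K. DC_surface_assoc (DIM('a) - k) K S) \<and>
                 Z_eps_K \<Omega> (\<lambda>x. g x - h x) (\<epsilon>/2) K \<subseteq> \<Union>(FF K)" if "K \<in> Fam" for K
    unfolding FF_def using Fam(2) that eps
    by (intro someI_ex[OF part_i[OF k \<Omega> cg ch lg lh]]) auto
  show ?thesis
  proof (intro exI[of _ "\<Union>(FF ` Fam)"] conjI ballI)
    show "finite (\<Union>(FF ` Fam))" using Fam(1) FF by auto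
    show "DC_surface (DIM('a) - k) S" if "S \<in> \<Union>(FF ` Fam)" for S
      using that FF unfolding DC_surface_def by blast
    show "Z_eps \<Omega> (\<lambda>x. g x - h x) \<epsilon> k \<subseteq> \<Union>(\<Union>(FF ` Fam))"
    proof
      fix x assume "x \<in> Z_eps \<Omega> (\<lambda>x. g x - h x) \<epsilon> k"
      then obtain K' where K': "subspace K'" "dim K' = k" and xZ: "x \<in> Z_eps_K \<Omega> (\<lambda>x. g x - h x) \<epsilon> K'"
        unfolding Z_eps_def by blast
      obtain K where K: "K \<in> Fam" and Kc: "\<forall>v\<in>K. norm v = 1 \<longrightarrow> (\<exists>v'\<in>K'. norm v' = 1 \<and> norm (v - v') \<le> \<delta>)"
        using Fam(3) K' by blast
      have x: "x \<in> \<Omega>" using xZ unfolding Z_eps_K_def by auto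
      define Fv where "Fv v = dir_deriv_plus (\<lambda>x. g x - h x) x v + dir_deriv_plus (\<lambda>x. g x - h x) x (- v)" for v
      have fd: "dir_deriv_plus (\<lambda>x. g x - h x) x v = dir_deriv_plus gg x v - dir_deriv_plus hh x v" for v
        by (rule dd_diff[OF \<Omega>(1) x geq heq Gl Hl])
      have Flip: "Fv v' - Fv v \<le> 2 * (Lg + Lh) * norm (v - v')" for v v'
      proof -
        have a: "\<bar>dir_deriv_plus gg x v - dir_deriv_plus gg x v'\<bar> \<le> Lg * norm (v - v')"
          by (rule cvxlip.D_lip[OF Gl])
        have b: "\<bar>dir_deriv_plus gg x (-v) - dir_deriv_plus gg x (-v')\<bar> \<le> Lg * norm (v - v')"
          using cvxlip.D_lip[OF Gl, of x "-v" "-v'"] by (simp add: norm_minus_commute)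
        have c: "\<bar>dir_deriv_plus hh x v - dir_deriv_plus hh x v'\<bar> \<le> Lh * norm (v - v')"
          by (rule cvxlip.D_lip[OF Hl])
        have d: "\<bar>dir_deriv_plus hh x (-v) - dir_deriv_plus hh x (-v')\<bar> \<le> Lh * norm (v - v')"
          using cvxlip.D_lip[OF Hl, of x "-v" "-v'"] by (simp add: norm_minus_commute)
        show ?thesis unfolding Fv_def fd using a b c d by (simp add: abs_le_iff algebra_simps)
      qed
      have "x \<in> Z_eps_K \<Omega> (\<lambda>x. g x - h x) (\<epsilon>/2) K"
        unfolding Z_eps_K_def mem_Collect_eq
      proof (intro conjI ballI impI)
        show "x \<in> \<Omega>" by (rule x)
        fix v assume v: "v \<in> K" "norm v = 1"
        then obtain v' where v': "v' \<in> K'" "norm v' = 1" "norm (v - v') \<le> \<delta>" using Kc by blast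
        have "Fv v' > \<epsilon>" using xZ v' unfolding Z_eps_K_def Fv_def by blast
        moreover have "2 * (Lg + Lh) * norm (v - v') \<le> 2 * (Lg + Lh) * \<delta>"
          using v'(3) Lg Lh by (intro mult_left_mono) auto
        ultimately have "Fv v > \<epsilon> / 2" using Flip[of v' v] dsmall by linarith
        then show "dir_deriv_plus (\<lambda>x. g x - h x) x v + dir_deriv_plus (\<lambda>x. g x - h x) x (- v) > \<epsilon> / 2"
          unfolding Fv_def .
      qed
      then show "x \<in> \<Union>(\<Union>(FF ` Fam))" using FF[OF K] K by blast
    qed
  qed
qed

theorem proposition5p1:
  fixes \<Omega> :: "'a::euclidean_space set" and g h :: "'a \<Rightarrow> real" and k :: nat and \<epsilon> :: real
  assumes "1 \<le> k" "k < DIM('a)"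
    and "open \<Omega>" "convex \<Omega>"
    and "convex_on \<Omega> g" "convex_on \<Omega> h"
    and "\<exists>C. C-lipschitz_on \<Omega> g" "\<exists>C. C-lipschitz_on \<Omega> h"
    and "\<epsilon> > 0"
  shows "(\<forall>K. subspace K \<and> dim K = k \<longrightarrow>
            (\<exists>F. finite F \<and> (\<forall>S\<in>F. DC_surface_assoc (DIM('a) - k) K S) \<and>
                 Z_eps_K \<Omega> (\<lambda>x. g x - h x) \<epsilon> K \<subseteq> \<Union>F))
       \<and> (\<exists>F. finite F \<and> (\<forall>S\<in>F. DC_surface (DIM('a) - k) S) \<and>
                 Z_eps \<Omega> (\<lambda>x. g x - h x) \<epsilon> k \<subseteq> \<Union>F)"
proof -
  obtain Lg where lg: "Lg-lipschitz_on \<Omega> g" using assms(7) by blast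
  obtain Lh where lh: "Lh-lipschitz_on \<Omega> h" using assms(8) by blast
  show ?thesis
    using part_i[OF assms(1-6) lg lh assms(9)] part_ii[OF assms(1-6) lg lh assms(9)] by blast
qed


end
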